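(* Let $N$ be the generalised Cartan matrix of type $A_r$ ($r\ge1$) or $A^{(1)}_{r-1}$ ($r\ge2$), let $A=[A_{ij}]$ be a solution matrix of $N$, and let $\mathfrak h$, $\alpha_i$, $Z$, $\mathcal A$, $v_1,\dots,v_r$ be as in the context, with $F:\mathfrak h\to\mathrm{Der}(\mathcal A)$ a Lie algebra homomorphism satisfying $\ker F=Z$ and $F(H)(v_i)=\alpha_i(H)v_i$. Then there exist unique $\delta_1,\dots,\delta_r\in\mathrm{Im}\,F$ with $\alpha_i(\delta_j)=A_{ij}$ for all $i,j$; setting $\delta_{-i}=\frac{1}{A_{ii}}\bigl(-F(H_i)+\frac{1}{A_{ii}}\delta_i\bigr)$, the elements $\mathbf X_i=v_i\delta_i$, $\mathbf X_{-i}=v_i^{-1}\delta_{-i}$ satisfy $[\mathbf X_i,\mathbf X_{-i}]=F(H_i)$ and $[\mathbf X_i,\mathbf X_{-j}]=0$ for $i\ne j$; hence $F(H_a)$, $\mathbf X_{\pm i}$ satisfy all the defining relations (a)–(e) of $\hat{\mathfrak g}(N)$ (Problem 1 has a solution).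
   Context: The generalised Cartan matrix of type $A_r$ ($r\ge1$) is the $r\times r$ matrix $N=[n(i,j)]$ with $2$ on the diagonal, $-1$ in positions $(i,i\pm1)$ and $0$ elsewhere; that of type $A^{(1)}_1$ is $\begin{pmatrix}2&-2\\-2&2\end{pmatrix}$; that of type $A^{(1)}_{r-1}$ ($r\ge3$) has $2$ on the diagonal, $-1$ in positions $(i,i\pm1)$ and $(1,r),(r,1)$, $0$ elsewhere. A solution matrix of $N$ is an $r\times r$ complex matrix $A=[A_{ij}]$ with all $A_{ii}\ne0$ such that $A'=[A_{ij}/A_{jj}]$ satisfies: $A'_{ij}\in\{0,-1\}$ for $i\ne j$; $A'_{ij}+A'_{ji}=n(j,i)$; and if $A'_{ij}=-1$ then the $i$-th row and $j$-th column of $A'$ have no other entries $-1$. Let $s$ be the corank of $N$ ($s=0$ for $A_r$, $s=1$ for $A^{(1)}_{r-1}$), $\mathfrak h$ the complex vector space with basis $H_1,\dots,H_{r+s}$, $\alpha_1,\dots,\alpha_r\in\mathfrak h^*$ linearly independent with $\alpha_j(H_i)=n(i,j)$ ($1\le i,j\le r$), and $Z=\bigcap_i\ker\alpha_i$. Since $\ker F\subseteq Z$, each $\alpha_i$ induces a linear form on $\mathrm{Im}\,F$ via $\alpha_i(F(H))=\alpha_i(H)$. $\mathcal A$ is a complex commutative algebra, $\mathrm{Der}(\mathcal A)$ its Lie algebra of derivations; for $a\in\mathcal A$, $D\in\mathrm{Der}(\mathcal A)$, $aD$ is $b\mapsto aD(b)$; $v_1,\dots,v_r\in\mathcal A$ are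 invertible. The defining relations of $\hat{\mathfrak g}(N)$, for $\mathbf H_a=F(H_a)$: (a) $[\mathbf H_a,\mathbf H_b]=0$; (b) $[\mathbf X_i,\mathbf X_{-i}]=\mathbf H_i$, $[\mathbf X_i,\mathbf X_{-j}]=0$ ($i\ne j$); (c) $[\mathbf H_a,\mathbf X_{\pm j}]=\pm\alpha_j(H_a)\mathbf X_{\pm j}$; (d) $\mathrm{ad}(\mathbf X_i)^{1-n(i,j)}(\mathbf X_j)=0$ ($i\ne j$); (e) $\mathrm{ad}(\mathbf X_{-i})^{1-n(i,j)}(\mathbf X_{-j})=0$ ($i\ne j$). *)

theory Defs
  imports Complex_Main
begin

definition gcm_A :: "nat \<Rightarrow> nat \<Rightarrow> nat \<Rightarrow> int" where
  "gcm_A r i j = (if i = j then 2 else if i = j + 1 \<or> j = i + 1 then -1 else 0)"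

definition gcm_Aff :: "nat \<Rightarrow> nat \<Rightarrow> nat \<Rightarrow> int" where
  "gcm_Aff r i j =
    (if r = 2 then (if i = j then 2 else -2)
     else if i = j then 2
     else if i = j + 1 \<or> j = i + 1 \<or> (i = 1 \<and> j = r) \<or> (i = r \<and> j = 1) then -1
     else 0)"

definition normA :: "(nat \<Rightarrow> nat \<Rightarrow> complex) \<Rightarrow> nat \<Rightarrow> nat \<Rightarrow> complex" where
  "normA A i j = A i j / A j j"

definition solution_matrix ::
  "nat \<Rightarrow> (nat \<Rightarrow> nat \<Rightarrow> int) \<Rightarrow> (nat \<Rightarrow> nat \<Rightarrow> complex) \<Rightarrow> bool" where
  "solution_matrix r N A \<longleftrightarrow>
     (\<forall>i\<in>{1..r}. A i i \<noteq> 0) \<and>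
     (\<forall>i\<in>{1..r}. \<forall>j\<in>{1..r}. i \<noteq> j \<longrightarrow> normA A i j \<in> {0, -1}) \<and>
     (\<forall>i\<in>{1..r}. \<forall>j\<in>{1..r}. i \<noteq> j \<longrightarrow> normA A i j + normA A j i = of_int (N j i)) \<and>
     (\<forall>i\<in>{1..r}. \<forall>j\<in>{1..r}. i \<noteq> j \<longrightarrow> normA A i j = -1 \<longrightarrow>
        (\<forall>k\<in>{1..r}. k \<noteq> j \<longrightarrow> normA A i k \<noteq> -1) \<and>
        (\<forall>k\<in>{1..r}. k \<noteq> i \<longrightarrow> normA A k j \<noteq> -1))"

text \<open>A commutative complex algebra is a commutative ring ''a together with a unital
  ring homomorphism emb from the complex numbers (the structure map); scalar
  multiplication is c . x = emb c * x.\<close>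
definition calg :: "(complex \<Rightarrow> 'a::comm_ring_1) \<Rightarrow> bool" where
  "calg emb \<longleftrightarrow> emb 1 = 1 \<and> (\<forall>x y. emb (x + y) = emb x + emb y) \<and>
                 (\<forall>x y. emb (x * y) = emb x * emb y)"

definition derivation :: "(complex \<Rightarrow> 'a::comm_ring_1) \<Rightarrow> ('a \<Rightarrow> 'a) \<Rightarrow> bool" where
  "derivation emb D \<longleftrightarrow>
     (\<forall>x y. D (x + y) = D x + D y) \<and>
     (\<forall>c x. D (emb c * x) = emb c * D x) \<and>
     (\<forall>x y. D (x * y) = x * D y + y * D x)"

definition lbr :: "('a \<Rightarrow> 'a) \<Rightarrow> ('a \<Rightarrow> 'a) \<Rightarrow> 'a \<Rightarrow> 'a::comm_ring_1" where
  "lbr D E = (\<lambda>x. D (E x) - E (D x))"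

definition amul :: "'a \<Rightarrow> ('a \<Rightarrow> 'a) \<Rightarrow> 'a \<Rightarrow> 'a::comm_ring_1" where
  "amul a D = (\<lambda>x. a * D x)"

definition ainv :: "'a::comm_ring_1 \<Rightarrow> 'a" where
  "ainv v = (SOME w. v * w = 1)"

text \<open>An element of h is a coefficient function c with support in {1..n}, n = r+s,
  standing for sum_a c a H_a.\<close>
definition hspace :: "nat \<Rightarrow> (nat \<Rightarrow> complex) set" where
  "hspace n = {c. \<forall>a. a \<notin> {1..n} \<longrightarrow> c a = 0}"

definition Hb :: "nat \<Rightarrow> nat \<Rightarrow> complex" where
  "Hb a = (\<lambda>b. if b = a then 1 else 0)"

definition lform :: "nat \<Rightarrow> (nat \<Rightarrow> complex) \<Rightarrow> (nat \<Rightarrow> complex) \<Rightarrow> complex" where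
  "lform n f c = (\<Sum>a=1..n. c a * f a)"

text \<open>Complex-linear map h -> Der(A) determined by the images FH a of the H_a.\<close>
definition linmap :: "(complex \<Rightarrow> 'a::comm_ring_1) \<Rightarrow> nat \<Rightarrow> (nat \<Rightarrow> 'a \<Rightarrow> 'a)
     \<Rightarrow> (nat \<Rightarrow> complex) \<Rightarrow> 'a \<Rightarrow> 'a" where
  "linmap emb n FH c = (\<lambda>x. \<Sum>a=1..n. emb (c a) * FH a x)"

text \<open>Linear form alpha induced on Im F via alpha(F(H)) = alpha(H).\<close>
definition induced_form :: "(complex \<Rightarrow> 'a::comm_ring_1) \<Rightarrow> nat \<Rightarrow> (nat \<Rightarrow> 'a \<Rightarrow> 'a)
     \<Rightarrow> (nat \<Rightarrow> complex) \<Rightarrow> ('a \<Rightarrow> 'a) \<Rightarrow> complex" where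
  "induced_form emb n FH f d =
     lform n f (SOME c. c \<in> hspace n \<and> linmap emb n FH c = d)"

end

theory Submission
  imports Defs "Jordan_Normal_Form.Determinant"
begin

lemma sum_shift1: "(\<Sum>k=Suc 0..m. f k) = (\<Sum>k<m. f (Suc k))"
  by (induct m) auto

lemma square_surj:
  fixes G :: "nat \<Rightarrow> nat \<Rightarrow> complex"
  assumes inj: "\<forall>y. (\<forall>i\<in>{1..m}. (\<Sum>k=1..m. G i k * y k) = 0) \<longrightarrow> (\<forall>k\<in>{1..m}. y k = 0)"
  shows "\<exists>y. \<forall>i\<in>{1..m}. (\<Sum>k=1..m. G i k * y k) = b i"
proof -
  define G' where "G' = mat m m (\<lambda>(i,k). G (Suc i) (Suc k))"
  have G'c: "G' \<in> carrier_mat m m" by (simp add: G'_def)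
  have mv: "(G' *\<^sub>v v) $ i = (\<Sum>k=1..m. G (Suc i) k * v $ (k - 1))" if "i < m" "v \<in> carrier_vec m" for i v
    using that by (simp add: G'_def sum_shift1 scalar_prod_def atLeast0LessThan)
  have "det G' \<noteq> 0"
  proof
    assume "det G' = 0"
    then obtain v where v: "v \<in> carrier_vec m" "v \<noteq> 0\<^sub>v m" "G' *\<^sub>v v = 0\<^sub>v m"
      using det_0_iff_vec_prod_zero[OF G'c] by auto
    define y where "y k = v $ (k-1)" for k
    have "\<forall>i\<in>{1..m}. (\<Sum>k=1..m. G i k * y k) = 0"
    proof
      fix i assume i: "i \<in> {1..m}"
      have "(G' *\<^sub>v v) $ (i-1) = 0" using v i G'c by auto
      then show "(\<Sum>k=1..m. G i k * y k) = 0" using mv[of "i-1" v] i v by (auto simp: y_def)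
    qed
    then have yz: "\<forall>k\<in>{1..m}. y k = 0" using inj by blast
    have "v = 0\<^sub>v m"
    proof (intro eq_vecI)
      fix k assume "k < dim_vec (0\<^sub>v m)"
      then have "Suc k \<in> {1..m}" by simp
      then show "v $ k = 0\<^sub>v m $ k" using yz \<open>k < dim_vec (0\<^sub>v m)\<close> by (force simp: y_def)
    qed (use v in auto)
    with v show False by simp
  qed
  define bv where "bv = vec m (\<lambda>i. b (Suc i))"
  define u where "u = (1 / det G') \<cdot>\<^sub>v (adj_mat G' *\<^sub>v bv)"
  have bvc: "bv \<in> carrier_vec m" by (simp add: bv_def)
  have uc: "u \<in> carrier_vec m" using adj_mat(1)[OF G'c] bvc by (simp add: u_def)
  have "G' *\<^sub>v u = (1 / det G') \<cdot>\<^sub>v (G' *\<^sub>v (adj_mat G' *\<^sub>v bv))"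
    unfolding u_def using mult_mat_vec[OF G'c] adj_mat(1)[OF G'c] bvc by simp
  also have "G' *\<^sub>v (adj_mat G' *\<^sub>v bv) = (det G' \<cdot>\<^sub>m 1\<^sub>m m) *\<^sub>v bv"
    using assoc_mult_mat_vec[OF G'c adj_mat(1)[OF G'c] bvc] adj_mat(2)[OF G'c] by simp
  also have "\<dots> = det G' \<cdot>\<^sub>v bv"
    using bvc by (intro eq_vecI) (auto simp: scalar_prod_def if_distrib if_distribR sum.delta cong: if_cong)
  finally have Gu: "G' *\<^sub>v u = bv" using \<open>det G' \<noteq> 0\<close> bvc by (auto intro!: eq_vecI)
  show ?thesis
  proof (intro exI ballI)
    fix i assume i: "i \<in> {1..m}"
    have "(G' *\<^sub>v u) $ (i-1) = b i" using Gu i by (auto simp: bv_def)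
    then show "(\<Sum>k=1..m. G i k * u $ (k - 1)) = b i" using mv[of "i-1" u] i uc by auto
  qed
qed

lemma sum_cnj_sq_zero:
  fixes z :: "nat \<Rightarrow> complex"
  assumes "(\<Sum>a\<in>A. cnj (z a) * z a) = 0" "finite A" "a \<in> A"
  shows "z a = 0"
proof -
  have e: "cnj (z a) * z a = complex_of_real ((cmod (z a))\<^sup>2)" for a
    by (metis complex_norm_square mult.commute of_real_power)
  have "complex_of_real (\<Sum>a\<in>A. (cmod (z a))\<^sup>2) = (\<Sum>a\<in>A. cnj (z a) * z a)"
    by (simp only: of_real_sum e)
  then have "complex_of_real (\<Sum>a\<in>A. (cmod (z a))\<^sup>2) = 0" using assms(1) by simp
  then have "(\<Sum>a\<in>A. (cmod (z a))\<^sup>2) = 0" by (simp only: of_real_eq_0_iff)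
  then have "(cmod (z a))\<^sup>2 = 0" using sum_nonneg_eq_0_iff[OF assms(2), of "\<lambda>a. (cmod (z a))\<^sup>2"] assms(3) by auto
  then show ?thesis by simp
qed

lemma rect_surj:
  fixes M :: "nat \<Rightarrow> nat \<Rightarrow> complex"
  assumes indep: "\<forall>c. (\<forall>a\<in>{1..n}. (\<Sum>i=1..m. c i * M i a) = 0) \<longrightarrow> (\<forall>i\<in>{1..m}. c i = 0)"
  shows "\<exists>x. (\<forall>a. a \<notin> {1..n} \<longrightarrow> x a = 0) \<and> (\<forall>i\<in>{1..m}. (\<Sum>a=1..n. x a * M i a) = b i)"
proof -
  define G where "G i k = (\<Sum>a=1..n. M i a * cnj (M k a))" for i k
  have "\<forall>y. (\<forall>i\<in>{1..m}. (\<Sum>k=1..m. G i k * y k) = 0) \<longrightarrow> (\<forall>k\<in>{1..m}. y k = 0)"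
  proof (intro allI impI)
    fix y assume H: "\<forall>i\<in>{1..m}. (\<Sum>k=1..m. G i k * y k) = 0"
    define z where "z a = (\<Sum>k=1..m. cnj (M k a) * y k)" for a
    have cz: "cnj (z a) = (\<Sum>i=1..m. cnj (y i) * M i a)" for a
      by (simp add: z_def mult.commute)
    have "(\<Sum>i=1..m. cnj (y i) * (\<Sum>k=1..m. G i k * y k)) = 0" using H by simp
    moreover have "(\<Sum>i=1..m. cnj (y i) * (\<Sum>k=1..m. G i k * y k)) = (\<Sum>a=1..n. cnj (z a) * z a)"
    proof -
      have "(\<Sum>i=1..m. cnj (y i) * (\<Sum>k=1..m. G i k * y k))
          = (\<Sum>i=1..m. \<Sum>k=1..m. \<Sum>a=1..n. cnj (y i) * M i a * (cnj (M k a) * y k))"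
        by (simp add: G_def sum_distrib_left sum_distrib_right mult_ac)
      also have "\<dots> = (\<Sum>i=1..m. \<Sum>a=1..n. \<Sum>k=1..m. cnj (y i) * M i a * (cnj (M k a) * y k))"
        by (rule sum.cong[OF refl], rule sum.swap)
      also have "\<dots> = (\<Sum>a=1..n. \<Sum>i=1..m. \<Sum>k=1..m. cnj (y i) * M i a * (cnj (M k a) * y k))"
        by (rule sum.swap)
      also have "\<dots> = (\<Sum>a=1..n. cnj (z a) * z a)"
        by (simp only: cz) (simp only: z_def sum_product)
      finally show ?thesis .
    qed
    ultimately have S: "(\<Sum>a=1..n. cnj (z a) * z a) = 0" by simp
    have "\<forall>a\<in>{1..n}. (\<Sum>i=1..m. cnj (y i) * M i a) = 0"
      using sum_cnj_sq_zero[OF S] cz by (metis complex_cnj_zero finite_atLeastAtMost)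
    then have "\<forall>i\<in>{1..m}. cnj (y i) = 0" using indep[rule_format, of "\<lambda>i. cnj (y i)"] by blast
    then show "\<forall>k\<in>{1..m}. y k = 0" by simp
  qed
  from square_surj[OF this] obtain y where y: "\<forall>i\<in>{1..m}. (\<Sum>k=1..m. G i k * y k) = b i" by blast
  define x where "x a = (if a \<in> {1..n} then (\<Sum>k=1..m. cnj (M k a) * y k) else 0)" for a
  show ?thesis
  proof (intro exI conjI allI impI ballI)
    fix a assume "a \<notin> {1..n}" then show "x a = 0" by (auto simp: x_def)
  next
    fix i assume i: "i \<in> {1..m}"
    have "(\<Sum>a=1..n. x a * M i a) = (\<Sum>a=1..n. \<Sum>k=1..m. M i a * cnj (M k a) * y k)"
      by (simp add: x_def sum_distrib_left sum_distrib_right mult_ac)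
    also have "\<dots> = (\<Sum>k=1..m. G i k * y k)"
      by (simp add: G_def sum_distrib_right) (rule sum.swap)
    finally show "(\<Sum>a=1..n. x a * M i a) = b i" using y i by simp
  qed
qed

lemma calg_facts:
  assumes "calg emb"
  shows "emb 1 = 1" "emb (x + y) = emb x + emb y" "emb (x * y) = emb x * emb y"
    "emb 0 = 0" "emb (- x) = - emb x" "emb (x - y) = emb x - emb y"
proof -
  show e1: "emb 1 = 1" and ea: "emb (x + y) = emb x + emb y" and "emb (x * y) = emb x * emb y"
    using assms unfolding calg_def by auto
  have ea': "\<And>x y. emb (x + y) = emb x + emb y" using assms unfolding calg_def by auto
  have "emb 0 = emb 0 + emb 0" using ea'[of 0 0] by simp
  then show e0: "emb 0 = 0" by simp
  have "emb x + emb (- x) = 0" using ea'[of x "- x"] e0 by simp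
  then show en: "emb (- x) = - emb x" by (simp add: eq_neg_iff_add_eq_0 add.commute)
  have en': "\<And>x. emb (- x) = - emb x"
  proof -
    fix x
    have "emb x + emb (- x) = 0" using ea'[of x "- x"] e0 by simp
    then show "emb (- x) = - emb x" by (simp add: eq_neg_iff_add_eq_0 add.commute)
  qed
  have "emb (x - y) = emb x + emb (- y)" using ea'[of x "- y"] by simp
  then show "emb (x - y) = emb x - emb y" by (simp only: en') simp
qed

lemma lbr_amul:
  assumes "\<And>x y. D (x * y) = x * D y + y * D x" "\<And>x y. E (x * y) = x * E y + y * E x"
    "\<And>x. D (E x) = E (D x)"
  shows "lbr (amul a D) (amul b E) = (\<lambda>x. a * D b * E x - b * E a * D x)"
  unfolding lbr_def amul_def using assms by (auto simp: algebra_simps)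

lemma lbr_left:
  assumes "\<And>x y. D (x * y) = x * D y + y * D x" "\<And>x. D (E x) = E (D x)" "D b = beta * b"
  shows "lbr D (amul b E) = (\<lambda>x. beta * amul b E x)"
  unfolding lbr_def amul_def using assms by (auto simp: algebra_simps)

fun PQ :: "complex \<Rightarrow> complex \<Rightarrow> complex \<Rightarrow> nat \<Rightarrow> complex \<times> complex" where
  "PQ aii aij aji 0 = (0, 1)"
| "PQ aii aij aji (Suc k) = (let p = fst (PQ aii aij aji k); q = snd (PQ aii aij aji k);
      be = of_nat k * aii + aji; ga = p * aii + q * aij in (be * p - ga, be * q))"

lemma PQ1: "aij = 0 \<Longrightarrow> aji = 0 \<Longrightarrow> PQ aii aij aji 1 = (0,0)"
  by (simp add: Let_def)
lemma PQ2: "aji = 0 \<or> (aij = 0 \<and> aji = - aii) \<Longrightarrow> PQ aii aij aji 2 = (0,0)"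
  by (auto simp: Let_def numeral_eq_Suc algebra_simps)
lemma PQ3: "aji = - aii \<Longrightarrow> PQ aii aij aji 3 = (0,0)"
  by (auto simp: Let_def numeral_eq_Suc algebra_simps)

locale dset =
  fixes emb :: "complex \<Rightarrow> 'a::comm_ring_1" and n :: nat and FH :: "nat \<Rightarrow> 'a \<Rightarrow> 'a"
  assumes alg: "calg emb"
    and der: "\<forall>a\<in>{1..n}. derivation emb (FH a)"
    and hom: "\<forall>a\<in>{1..n}. \<forall>b\<in>{1..n}. lbr (FH a) (FH b) = (\<lambda>x. 0)"
begin

abbreviation F where "F c \<equiv> linmap emb n FH c"

lemmas E = calg_facts[OF alg]

lemma FH_add: "a \<in> {1..n} \<Longrightarrow> FH a (x + y) = FH a x + FH a y"
  using der unfolding derivation_def by blast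
lemma FH_scal: "a \<in> {1..n} \<Longrightarrow> FH a (emb k * x) = emb k * FH a x"
  using der unfolding derivation_def by blast
lemma FH_mult: "a \<in> {1..n} \<Longrightarrow> FH a (x * y) = x * FH a y + y * FH a x"
  using der unfolding derivation_def by blast
lemma FH_comm: "a \<in> {1..n} \<Longrightarrow> b \<in> {1..n} \<Longrightarrow> FH a (FH b x) = FH b (FH a x)"
  using hom unfolding lbr_def by (metis eq_iff_diff_eq_0)

lemma F_add: "F c (x + y) = F c x + F c y"
  unfolding linmap_def by (simp add: FH_add distrib_left sum.distrib)
lemma F_scal: "F c (emb k * x) = emb k * F c x"
proof -
  have "F c (emb k * x) = (\<Sum>a=1..n. emb k * (emb (c a) * FH a x))"
    unfolding linmap_def by (intro sum.cong refl) (simp add: FH_scal)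
  then show ?thesis unfolding linmap_def by (simp add: sum_distrib_left)
qed
lemma F_mult: "F c (x * y) = x * F c y + y * F c x"
  unfolding linmap_def by (simp add: FH_mult sum_distrib_left sum.distrib algebra_simps)
lemma F_zero: "F c 0 = 0"
  using F_add[of c 0 0] by simp
lemma F_one: "F c 1 = 0"
  using F_mult[of c 1 1] by simp
lemma F_sum: "finite B \<Longrightarrow> F c (\<Sum>b\<in>B. f b) = (\<Sum>b\<in>B. F c (f b))"
  by (induct B rule: finite_induct) (auto simp: F_zero F_add)
lemma F_comm: "F c (F d x) = F d (F c x)"
proof -
  have Fd: "F d x = (\<Sum>b=1..n. emb (d b) * FH b x)" by (simp add: linmap_def)
  have FcH: "F c (FH b x) = (\<Sum>a=1..n. emb (c a) * FH a (FH b x))" for b by (simp add: linmap_def)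
  have "F c (F d x) = (\<Sum>b=1..n. emb (d b) * (\<Sum>a=1..n. emb (c a) * FH a (FH b x)))"
    by (simp only: Fd F_sum[OF finite_atLeastAtMost] F_scal FcH)
  also have "\<dots> = (\<Sum>b=1..n. \<Sum>a=1..n. emb (c a) * emb (d b) * FH b (FH a x))"
    by (auto simp: sum_distrib_left mult_ac FH_comm intro!: sum.cong)
  also have "\<dots> = (\<Sum>a=1..n. \<Sum>b=1..n. emb (c a) * emb (d b) * FH b (FH a x))"
    by (rule sum.swap)
  also have "\<dots> = (\<Sum>a=1..n. emb (c a) * (\<Sum>b=1..n. emb (d b) * FH b (FH a x)))"
    by (simp add: sum_distrib_left mult_ac)
  also have "\<dots> = F d (F c x)"
  proof -
    have Fc: "F c x = (\<Sum>a=1..n. emb (c a) * FH a x)" by (simp add: linmap_def)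
    have FdH: "F d (FH a x) = (\<Sum>b=1..n. emb (d b) * FH b (FH a x))" for a by (simp add: linmap_def)
    show ?thesis by (simp only: Fc F_sum[OF finite_atLeastAtMost] F_scal FdH)
  qed
  finally show ?thesis .
qed

lemma F_lin: "F (\<lambda>a. p * c a + q * d a) x = emb p * F c x + emb q * F d x"
  unfolding linmap_def by (simp add: E sum_distrib_left sum.distrib algebra_simps)
lemma F_zerov: "F (\<lambda>a. 0) = (\<lambda>x. 0)"
  unfolding linmap_def by (simp add: E)
lemma F_Hb: "j \<in> {1..n} \<Longrightarrow> F (Hb j) = FH j"
proof
  fix x assume j: "j \<in> {1..n}"
  have "F (Hb j) x = (\<Sum>a\<in>{1..n}. if a = j then FH j x else 0)"
    unfolding linmap_def Hb_def by (intro sum.cong) (auto simp: E)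
  also have "\<dots> = FH j x" using j by simp
  finally show "F (Hb j) x = FH j x" .
qed

lemma F_inv: assumes "F c v = emb la * v" "v * w = 1" shows "F c w = emb (- la) * w"
proof -
  have "0 = v * F c w + w * (emb la * v)" using F_mult[of c v w] assms F_one by simp
  then have "w * 0 = w * (v * F c w + w * (emb la * v))" by simp
  then have "0 = (v * w) * F c w + (v * w) * (emb la * w)" by (simp add: algebra_simps)
  then have "F c w + emb la * w = 0" using assms(2) by (simp add: algebra_simps)
  then have "F c w = - (emb la * w)" by (simp add: eq_neg_iff_add_eq_0)
  then show ?thesis by (simp add: E(5))
qed

lemma F_prod: assumes "F c x = emb la * x" "F c y = emb mu * y" shows "F c (x * y) = emb (la + mu) * (x * y)"
  using assms by (simp add: F_mult E algebra_simps)

lemma F_pow: assumes "F c x = emb la * x" shows "F c (x ^ k) = emb (of_nat k * la) * x ^ k"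
proof (induct k)
  case 0 then show ?case by (simp add: F_one E)
next
  case (Suc k)
  have "F c (x ^ Suc k) = F c (x * x ^ k)" by simp
  also have "\<dots> = emb (la + of_nat k * la) * (x * x ^ k)" by (rule F_prod[OF assms Suc])
  finally show ?case by (simp add: algebra_simps)
qed

lemma ad_iter:
  fixes g :: "nat \<Rightarrow> 'a" and ev :: "nat \<Rightarrow> (nat \<Rightarrow> complex) \<Rightarrow> complex"
  assumes S: "e \<in> S" "f \<in> S" "\<And>p q d d'. d \<in> S \<Longrightarrow> d' \<in> S \<Longrightarrow> (\<lambda>a. p * d a + q * d' a) \<in> S"
    and EV: "\<And>d l. d \<in> S \<Longrightarrow> l \<in> {i,j} \<Longrightarrow> F d (g l) = emb (ev l d) * g l"
    and LIN: "\<And>l p q d d'. d \<in> S \<Longrightarrow> d' \<in> S \<Longrightarrow> l \<in> {i,j} \<Longrightarrow>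
                 ev l (\<lambda>a. p * d a + q * d' a) = p * ev l d + q * ev l d'"
  shows "(lbr (amul (g i) (F e)) ^^ k) (amul (g j) (F f)) =
         amul (g i ^ k * g j) (F (\<lambda>a. fst (PQ (ev i e) (ev i f) (ev j e) k) * e a
                                        + snd (PQ (ev i e) (ev i f) (ev j e) k) * f a))"
proof (induct k)
  case 0
  show ?case by (rule ext) (simp add: amul_def F_lin E)
next
  case (Suc k)
  define p where "p = fst (PQ (ev i e) (ev i f) (ev j e) k)"
  define q where "q = snd (PQ (ev i e) (ev i f) (ev j e) k)"
  define t where "t = (\<lambda>a. p * e a + q * f a)"
  define u where "u = g i ^ k * g j"
  define be where "be = of_nat k * ev i e + ev j e"
  define ga where "ga = p * ev i e + q * ev i f"
  have tS: "t \<in> S" unfolding t_def using S by blast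
  have Du: "F e u = emb be * u"
    unfolding u_def be_def by (rule F_prod[OF F_pow[OF EV[OF S(1)]] EV[OF S(1)]]) auto
  have Ei: "F t (g i) = emb ga * g i"
    using EV[OF tS, of i] LIN[OF S(1) S(2), of i p q] by (simp add: t_def ga_def)
  have "(lbr (amul (g i) (F e)) ^^ Suc k) (amul (g j) (F f)) = lbr (amul (g i) (F e)) (amul u (F t))"
    using Suc by (simp add: p_def q_def t_def u_def)
  also have "\<dots> = (\<lambda>x. g i * F e u * F t x - u * F t (g i) * F e x)"
    by (rule lbr_amul) (auto simp: F_mult F_comm)
  also have "\<dots> = amul (g i ^ Suc k * g j) (F (\<lambda>a. (be * p - ga) * e a + (be * q) * f a))"
    unfolding amul_def Du Ei unfolding t_def F_lin u_def
    by (rule ext) (simp add: E algebra_simps)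
  finally show ?case by (simp add: p_def q_def be_def ga_def Let_def)
qed

end

lemma gcmA_sym: "gcm_A r i j = gcm_A r j i" by (simp add: gcm_A_def)
lemma gcmAff_sym: "gcm_Aff r i j = gcm_Aff r j i" unfolding gcm_Aff_def by auto

lemma N_facts:
  assumes "(N = gcm_A r \<and> r \<ge> 1 \<and> s = 0) \<or> (N = gcm_Aff r \<and> r \<ge> 2 \<and> s = (1::nat))"
  shows "N i j = N j i" "N i i = 2"
  using assms gcmA_sym gcmAff_sym by (auto simp: gcm_A_def gcm_Aff_def)

lemma sol_unfold:
  assumes "solution_matrix r N A"
  shows "\<forall>i\<in>{1..r}. A i i \<noteq> 0"
    "\<forall>i\<in>{1..r}. \<forall>j\<in>{1..r}. i \<noteq> j \<longrightarrow> normA A i j \<in> {0, -1}"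
    "\<forall>i\<in>{1..r}. \<forall>j\<in>{1..r}. i \<noteq> j \<longrightarrow> normA A i j + normA A j i = of_int (N j i)"
    "\<forall>i\<in>{1..r}. \<forall>j\<in>{1..r}. i \<noteq> j \<longrightarrow> normA A i j = -1 \<longrightarrow>
        (\<forall>k\<in>{1..r}. k \<noteq> j \<longrightarrow> normA A i k \<noteq> -1) \<and>
        (\<forall>k\<in>{1..r}. k \<noteq> i \<longrightarrow> normA A k j \<noteq> -1)"
  using assms unfolding solution_matrix_def by blast+

lemma sol_facts:
  assumes sol: "solution_matrix r N A" and i: "i \<in> {1..r}" and j: "j \<in> {1..r}" and ij: "i \<noteq> j"
  shows "A i i \<noteq> 0" "A i j = 0 \<or> A i j = - A j j"
    "A i j / A j j + A j i / A i i = of_int (N j i)"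
proof -
  note S = sol_unfold[OF sol]
  show ii: "A i i \<noteq> 0" using S(1) i by blast
  have jj: "A j j \<noteq> 0" using S(1) j by blast
  have "normA A i j \<in> {0, -1}" using S(2) i j ij by blast
  then have "A i j / A j j = 0 \<or> A i j / A j j = -1" unfolding normA_def by simp
  then show "A i j = 0 \<or> A i j = - A j j" using jj
    by (metis divide_eq_0_iff divide_eq_minus_1_iff)
  have "normA A i j + normA A j i = of_int (N j i)" using S(3) i j ij by blast
  then show "A i j / A j j + A j i / A i i = of_int (N j i)" unfolding normA_def .
qed

lemma num_serre:
  assumes sol: "solution_matrix r N A" and i: "i \<in> {1..r}" and j: "j \<in> {1..r}" and ij: "i \<noteq> j"
    and Ns: "N i j = N j i" and Nii: "N i i = 2"
  shows "PQ (A i i) (A i j) (A j i) (nat (1 - N i j)) = (0,0)"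
    "PQ (- (- (1 / A i i) * of_int (N i i) + 1 / A i i * (1 / A i i) * A i i))
        (- (- (1 / A j j) * of_int (N j i) + 1 / A j j * (1 / A j j) * A i j))
        (- (- (1 / A i i) * of_int (N i j) + 1 / A i i * (1 / A i i) * A j i)) (nat (1 - N i j)) = (0,0)"
proof -
  have ii: "A i i \<noteq> 0" and jj: "A j j \<noteq> 0" using sol_facts[OF sol i j ij] sol_facts[OF sol j i] ij by auto
  have c1: "A i j = 0 \<or> A i j = - A j j" using sol_facts[OF sol i j ij] by auto
  have c2: "A j i = 0 \<or> A j i = - A i i" using sol_facts[OF sol j i] ij by auto
  have sm: "A i j / A j j + A j i / A i i = of_int (N i j)" using sol_facts[OF sol i j ij] Ns by simp
  define yii where "yii = - (- (1 / A i i) * of_int (N i i) + 1 / A i i * (1 / A i i) * A i i)"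
  define yij where "yij = - (- (1 / A j j) * of_int (N j i) + 1 / A j j * (1 / A j j) * A i j)"
  define yji where "yji = - (- (1 / A i i) * of_int (N i j) + 1 / A i i * (1 / A i i) * A j i)"
  have yii: "yii = 1 / A i i" unfolding yii_def using Nii ii by (simp add: field_simps)
  have "PQ (A i i) (A i j) (A j i) (nat (1 - N i j)) = (0,0) \<and> PQ yii yij yji (nat (1 - N i j)) = (0,0)"
  proof (cases "A i j = 0")
    case T1: True
    show ?thesis
    proof (cases "A j i = 0")
      case True
      with T1 sm have N: "N i j = 0" by simp
      have "yij = 0" "yji = 0" unfolding yij_def yji_def using T1 True N Ns by simp_all
      then show ?thesis using T1 True N PQ1 by simp
    next
      case False
      with c2 have a: "A j i = - A i i" by simp
      with T1 sm ii have "of_int (N i j) = (-1 :: complex)" by simp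
      then have N: "N i j = -1" by (metis of_int_eq_iff of_int_minus of_int_1)
      have K: "nat (1 - N i j) = 2" using N by simp
      have "yji = 0" unfolding yji_def using a N ii by simp
      then show ?thesis using T1 a K PQ2 by simp
    qed
  next
    case F1: False
    with c1 have b: "A i j = - A j j" by simp
    show ?thesis
    proof (cases "A j i = 0")
      case True
      with b sm jj have "of_int (N i j) = (-1 :: complex)" by simp
      then have N: "N i j = -1" by (metis of_int_eq_iff of_int_minus of_int_1)
      have K: "nat (1 - N i j) = 2" using N by simp
      have "yij = 0" unfolding yij_def using b N Ns jj by simp
      moreover have "yji = - yii" unfolding yji_def yii using True N by simp
      ultimately show ?thesis using True K PQ2 by simp
    next
      case False
      with c2 have a: "A j i = - A i i" by simp
      with b sm ii jj have "of_int (N i j) = (-2 :: complex)" by simp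
      then have N: "N i j = -2" by (metis of_int_eq_iff of_int_minus of_int_numeral)
      have K: "nat (1 - N i j) = 3" using N by simp
      have "yji = - yii" unfolding yji_def yii using a N ii by (simp add: field_simps)
      then show ?thesis using a K PQ3 by simp
    qed
  qed
  then show "PQ (A i i) (A i j) (A j i) (nat (1 - N i j)) = (0,0)"
    "PQ (- (- (1 / A i i) * of_int (N i i) + 1 / A i i * (1 / A i i) * A i i))
        (- (- (1 / A j j) * of_int (N j i) + 1 / A j j * (1 / A j j) * A i j))
        (- (- (1 / A i i) * of_int (N i j) + 1 / A i i * (1 / A i i) * A j i)) (nat (1 - N i j)) = (0,0)"
    unfolding yii_def[symmetric] yij_def[symmetric] yji_def[symmetric] by auto
qed

lemma num_XX:
  assumes ii: "A i i \<noteq> 0" and Nii: "N i i = 2"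
  shows "- A i i * (- (1 / A i i) * of_int (N i l) + 1 / A i i * (1 / A i i) * A l i)
         - (- (1 / A i i) * of_int (N i i) + 1 / A i i * (1 / A i i) * (A i i::complex)) * A l i = of_int (N i l)"
  using ii Nii by (simp add: field_simps)

lemma num_XY:
  assumes sol: "solution_matrix r N A" and i: "i \<in> {1..r}" and j: "j \<in> {1..r}" and l: "l \<in> {1..r}"
    and ij: "i \<noteq> j" and Njj: "N j j = 2"
  shows "- A j i * (- (1 / A j j) * of_int (N j l) + 1 / A j j * (1 / A j j) * A l j)
         - (- (1 / A j j) * of_int (N j i) + 1 / A j j * (1 / A j j) * A i j) * A l i = 0"
proof -
  note S = sol_unfold[OF sol]
  have ii: "A i i \<noteq> 0" and jj: "A j j \<noteq> 0" using S(1) i j by blast+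
  have c2: "A j i = 0 \<or> A j i = - A i i" using sol_facts[OF sol j i] ij by auto
  have sm: "A i j / A j j + A j i / A i i = of_int (N j i)" using sol_facts[OF sol i j ij] by simp
  show ?thesis
  proof (cases "A j i = 0")
    case True
    then have "of_int (N j i) = A i j / A j j" using sm by simp
    then have "- (1 / A j j) * of_int (N j i) + 1 / A j j * (1 / A j j) * A i j = 0"
      using jj by (simp add: field_simps)
    then show ?thesis using True by simp
  next
    case False
    with c2 have a: "A j i = - A i i" by simp
    have Nji: "of_int (N j i) = A i j / A j j - 1" using sm a ii by simp
    have key: "of_int (N j l) = A l j / A j j - A l i / A i i"
    proof -
      consider "l = j" | "l = i" | "l \<noteq> i" "l \<noteq> j" by blast
      then show ?thesis
      proof cases
        case 1 then show ?thesis using Njj a ii jj by simp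
      next
        case 2 then show ?thesis using Nji ii by simp
      next
        case 3
        have m1: "normA A j i = -1" unfolding normA_def using a ii by simp
        have ji: "j \<noteq> i" using ij by simp
        have U: "(\<forall>k\<in>{1..r}. k \<noteq> i \<longrightarrow> normA A j k \<noteq> -1) \<and> (\<forall>k\<in>{1..r}. k \<noteq> j \<longrightarrow> normA A k i \<noteq> -1)"
          using S(4)[rule_format, OF j i ji m1] by simp
        have u: "normA A j l \<noteq> -1" "normA A l i \<noteq> -1"
          using U l 3 by auto
        have "normA A j l \<in> {0, -1}" "normA A l i \<in> {0, -1}"
          using S(2)[rule_format, OF j l] S(2)[rule_format, OF l i] 3 by auto
        with u have z: "normA A j l = 0" "normA A l i = 0" by auto
        have "normA A l j + normA A j l = of_int (N j l)" using S(3)[rule_format, OF l j] 3 by auto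
        then show ?thesis using z unfolding normA_def by simp
      qed
    qed
    have "- (1 / A j j) * of_int (N j i) + 1 / A j j * (1 / A j j) * A i j = 1 / A j j"
    proof -
      have Aij: "A i j = A j j * of_int (N j i) + A j j" using Nji jj by (simp add: field_simps)
      show ?thesis unfolding Aij using jj by (simp add: field_simps)
    qed
    moreover
    define x where "x = A l j / A j j"
    define y where "y = A l i / A i i"
    have Alj: "A l j = x * A j j" using jj by (simp add: x_def)
    have Ali: "A l i = y * A i i" using ii by (simp add: y_def)
    have key': "of_int (N j l) = x - y" using key by (simp add: x_def y_def)
    ultimately show ?thesis unfolding Alj Ali key' a using ii jj by (simp add: field_simps)
  qed
qed

lemma lform_lin: "lform m f (\<lambda>a. p * c a + q * d a) = p * lform m f c + q * lform m f d"
  unfolding lform_def by (simp add: sum.distrib sum_distrib_left algebra_simps)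
lemma lform_Hb: "a \<in> {1..m} \<Longrightarrow> lform m f (Hb a) = f a"
proof -
  assume a: "a \<in> {1..m}"
  have "lform m f (Hb a) = (\<Sum>b\<in>{1..m}. if b = a then f a else 0)"
    unfolding lform_def Hb_def by (intro sum.cong) auto
  then show ?thesis using a by simp
qed
lemma lform_zero: "lform m f (\<lambda>a. 0) = 0" unfolding lform_def by simp
lemma hs_lin: "c \<in> hspace m \<Longrightarrow> d \<in> hspace m \<Longrightarrow> (\<lambda>a. p * c a + q * d a) \<in> hspace m"
  unfolding hspace_def by auto
lemma Hb_hs: "a \<in> {1..m} \<Longrightarrow> Hb a \<in> hspace m"
  unfolding hspace_def Hb_def by auto
lemma zero_hs: "(\<lambda>a. 0) \<in> hspace m"
  unfolding hspace_def by auto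

theorem theorem3p14:
  fixes r s :: nat
    and N :: "nat \<Rightarrow> nat \<Rightarrow> int"
    and A :: "nat \<Rightarrow> nat \<Rightarrow> complex"
    and emb :: "complex \<Rightarrow> 'a::comm_ring_1"
    and alpha :: "nat \<Rightarrow> nat \<Rightarrow> complex"
    and FH :: "nat \<Rightarrow> 'a \<Rightarrow> 'a"
    and v :: "nat \<Rightarrow> 'a"
  assumes type: "(N = gcm_A r \<and> r \<ge> 1 \<and> s = 0) \<or> (N = gcm_Aff r \<and> r \<ge> 2 \<and> s = 1)"
    and sol: "solution_matrix r N A"
    and alg: "calg emb"
    and alpha_N: "\<forall>i\<in>{1..r}. \<forall>j\<in>{1..r}. alpha j i = of_int (N i j)"
    and alpha_indep: "\<forall>c. (\<forall>a\<in>{1..r+s}. (\<Sum>i=1..r. c i * alpha i a) = 0) \<longrightarrow> (\<forall>i\<in>{1..r}. c i = 0)"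
    and F_der: "\<forall>a\<in>{1..r+s}. derivation emb (FH a)"
    and F_hom: "\<forall>a\<in>{1..r+s}. \<forall>b\<in>{1..r+s}. lbr (FH a) (FH b) = (\<lambda>x. 0)"
    and F_ker: "\<forall>c\<in>hspace (r+s). linmap emb (r+s) FH c = (\<lambda>x. 0) \<longleftrightarrow>
                   (\<forall>i\<in>{1..r}. lform (r+s) (alpha i) c = 0)"
    and v_inv: "\<forall>i\<in>{1..r}. \<exists>w. v i * w = 1"
    and F_v: "\<forall>c\<in>hspace (r+s). \<forall>i\<in>{1..r}.
                linmap emb (r+s) FH c (v i) = emb (lform (r+s) (alpha i) c) * v i"
  shows "\<exists>\<delta> :: nat \<Rightarrow> 'a \<Rightarrow> 'a.
     (\<forall>j\<in>{1..r}. \<delta> j \<in> linmap emb (r+s) FH ` hspace (r+s) \<and>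
        (\<forall>i\<in>{1..r}. induced_form emb (r+s) FH (alpha i) (\<delta> j) = A i j)) \<and>
     (\<forall>\<delta>' :: nat \<Rightarrow> 'a \<Rightarrow> 'a.
        (\<forall>j\<in>{1..r}. \<delta>' j \<in> linmap emb (r+s) FH ` hspace (r+s) \<and>
          (\<forall>i\<in>{1..r}. induced_form emb (r+s) FH (alpha i) (\<delta>' j) = A i j))
        \<longrightarrow> (\<forall>j\<in>{1..r}. \<delta>' j = \<delta> j)) \<and>
     (let \<delta>m = (\<lambda>i x. emb (1 / A i i) * (- FH i x + emb (1 / A i i) * \<delta> i x));
          X = (\<lambda>i. amul (v i) (\<delta> i));
          Y = (\<lambda>i. amul (ainv (v i)) (\<delta>m i))
      in (\<forall>i\<in>{1..r}. lbr (X i) (Y i) = FH i) \<and>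
         (\<forall>i\<in>{1..r}. \<forall>j\<in>{1..r}. i \<noteq> j \<longrightarrow> lbr (X i) (Y j) = (\<lambda>x. 0)) \<and>
         (\<forall>a\<in>{1..r+s}. \<forall>b\<in>{1..r+s}. lbr (FH a) (FH b) = (\<lambda>x. 0)) \<and>
         (\<forall>a\<in>{1..r+s}. \<forall>j\<in>{1..r}.
            lbr (FH a) (X j) = (\<lambda>x. emb (alpha j a) * X j x) \<and>
            lbr (FH a) (Y j) = (\<lambda>x. - (emb (alpha j a) * Y j x))) \<and>
         (\<forall>i\<in>{1..r}. \<forall>j\<in>{1..r}. i \<noteq> j \<longrightarrow>
            (lbr (X i) ^^ nat (1 - N i j)) (X j) = (\<lambda>x. 0) \<and>
            (lbr (Y i) ^^ nat (1 - N i j)) (Y j) = (\<lambda>x. 0)))"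
proof -
  interpret dset emb "r+s" FH using alg F_der F_hom by unfold_locales auto
  have Nsym: "\<And>i j. N i j = N j i" and Ndiag: "\<And>i. N i i = 2" using N_facts[OF type] by auto
  note S = sol_unfold[OF sol]
  have Aii: "\<And>i. i \<in> {1..r} \<Longrightarrow> A i i \<noteq> 0" using S(1) by blast
  let ?hs = "hspace (r+s)"
  let ?lf = "\<lambda>l d. lform (r+s) (alpha l) d"
  have K4: "?lf l c = ?lf l d"
    if c: "c \<in> ?hs" and d: "d \<in> ?hs" and e: "F c = F d" and l: "l \<in> {1..r}" for c d l
  proof -
    let ?e = "\<lambda>a. 1 * c a + (-1) * d a"
    have eh: "?e \<in> ?hs" using hs_lin[OF c d] .
    have "F ?e = (\<lambda>x. 0)"
    proof
      fix x show "F ?e x = 0" unfolding F_lin using e by (simp add: E)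
    qed
    then have "\<forall>i\<in>{1..r}. ?lf i ?e = 0" using F_ker eh by blast
    then have "?lf l ?e = 0" using l by blast
    then show ?thesis unfolding lform_lin by simp
  qed
  have K5: "F c = F d"
    if c: "c \<in> ?hs" and d: "d \<in> ?hs" and e: "\<forall>l\<in>{1..r}. ?lf l c = ?lf l d" for c d
  proof -
    let ?e = "\<lambda>a. 1 * c a + (-1) * d a"
    have eh: "?e \<in> ?hs" using hs_lin[OF c d] .
    have "\<forall>i\<in>{1..r}. ?lf i ?e = 0" using e unfolding lform_lin by simp
    then have z: "F ?e = (\<lambda>x. 0)" using F_ker eh by blast
    show ?thesis
    proof
      fix x have "F ?e x = 0" using z by simp
      then show "F c x = F d x" unfolding F_lin by (simp add: E)
    qed
  qed
  have IF: "induced_form emb (r+s) FH (alpha l) (F c) = ?lf l c"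
    if c: "c \<in> ?hs" and l: "l \<in> {1..r}" for c l
  proof -
    have ex: "\<exists>c'. c' \<in> ?hs \<and> F c' = F c" using c by blast
    have "(SOME c'. c' \<in> ?hs \<and> F c' = F c) \<in> ?hs \<and> F (SOME c'. c' \<in> ?hs \<and> F c' = F c) = F c"
      by (rule someI_ex[OF ex])
    then show ?thesis unfolding induced_form_def using K4 c l by blast
  qed
  have "\<forall>j. \<exists>x. x \<in> ?hs \<and> (\<forall>i\<in>{1..r}. ?lf i x = A i j)"
  proof
    fix j
    obtain x where "(\<forall>a. a \<notin> {1..r+s} \<longrightarrow> x a = 0)" "(\<forall>i\<in>{1..r}. (\<Sum>a=1..r+s. x a * alpha i a) = A i j)"
      using rect_surj[OF alpha_indep, of "\<lambda>i. A i j"] by blast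
    then show "\<exists>x. x \<in> ?hs \<and> (\<forall>i\<in>{1..r}. ?lf i x = A i j)"
      unfolding hspace_def lform_def by blast
  qed
  then obtain cc where cch: "\<And>j. cc j \<in> ?hs" and ccA: "\<And>j i. i \<in> {1..r} \<Longrightarrow> ?lf i (cc j) = A i j"
    by metis
  define \<delta> where "\<delta> = (\<lambda>j. F (cc j))"
  define w where "w i = ainv (v i)" for i
  have vw: "v i * w i = 1" if i: "i \<in> {1..r}" for i
  proof -
    have "\<exists>w. v i * w = 1" using v_inv i by blast
    then show ?thesis unfolding w_def ainv_def by (rule someI_ex)
  qed
  have Fv: "F d (v l) = emb (?lf l d) * v l" if "d \<in> ?hs" "l \<in> {1..r}" for d l
    using F_v that by blast
  have Fw: "F d (w l) = emb (- ?lf l d) * w l" if "d \<in> ?hs" "l \<in> {1..r}" for d l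
    by (rule F_inv[OF Fv[OF that] vw[OF that(2)]])
  define cm where "cm i = (\<lambda>a. (- (1 / A i i)) * Hb i a + (1 / A i i * (1 / A i i)) * cc i a)" for i
  have cm_hs: "cm i \<in> ?hs" if "i \<in> {1..r}" for i
    unfolding cm_def using that by (intro hs_lin Hb_hs cch) auto
  have al_cm: "?lf l (cm i) = - (1 / A i i) * of_int (N i l) + 1 / A i i * (1 / A i i) * A l i"
    if i: "i \<in> {1..r}" and l: "l \<in> {1..r}" for i l
  proof -
    have "?lf l (Hb i) = alpha l i" using i by (intro lform_Hb) auto
    also have "\<dots> = of_int (N i l)" using alpha_N i l by blast
    finally show ?thesis unfolding cm_def lform_lin using ccA[OF l] by simp
  qed
  have dm: "(\<lambda>x. emb (1 / A i i) * (- FH i x + emb (1 / A i i) * \<delta> i x)) = F (cm i)"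
    if i: "i \<in> {1..r}" for i
  proof
    fix x
    have "F (Hb i) = FH i" using i by (intro F_Hb) auto
    then show "emb (1 / A i i) * (- FH i x + emb (1 / A i i) * \<delta> i x) = F (cm i) x"
      unfolding cm_def F_lin \<delta>_def E(3) E(5) by (simp add: algebra_simps)
  qed
  define Xf where "Xf = (\<lambda>i. amul (v i) (\<delta> i))"
  define Yf where "Yf = (\<lambda>i. amul (ainv (v i)) ((\<lambda>i x. emb (1 / A i i) * (- FH i x + emb (1 / A i i) * \<delta> i x)) i))"
  have XfF: "Xf i = amul (v i) (F (cc i))" for i unfolding Xf_def \<delta>_def by simp
  have YfF: "Yf i = amul (w i) (F (cm i))" if "i \<in> {1..r}" for i
    unfolding Yf_def w_def using dm[OF that] by simp
  have XY: "lbr (Xf i) (Yf j) = amul (v i * w j) (F (\<lambda>a. (- A j i) * cm j a + (- ?lf i (cm j)) * cc i a))"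
    if i: "i \<in> {1..r}" and j: "j \<in> {1..r}" for i j
  proof -
    have "lbr (Xf i) (Yf j) = (\<lambda>x. v i * F (cc i) (w j) * F (cm j) x - w j * F (cm j) (v i) * F (cc i) x)"
      unfolding XfF YfF[OF j] by (rule lbr_amul) (auto simp: F_mult F_comm)
    also have "\<dots> = amul (v i * w j) (F (\<lambda>a. (- A j i) * cm j a + (- ?lf i (cm j)) * cc i a))"
      unfolding Fw[OF cch j] Fv[OF cm_hs[OF j] i] ccA[OF j] amul_def
      unfolding F_lin by (rule ext) (simp add: E algebra_simps)
    finally show ?thesis .
  qed
  have P1: "\<forall>i\<in>{1..r}. lbr (Xf i) (Yf i) = FH i"
  proof
    fix i assume i: "i \<in> {1..r}"
    have "F (\<lambda>a. (- A i i) * cm i a + (- ?lf i (cm i)) * cc i a) = F (Hb i)"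
    proof (rule K5)
      show "(\<lambda>a. (- A i i) * cm i a + (- ?lf i (cm i)) * cc i a) \<in> ?hs"
        by (intro hs_lin cm_hs cch i)
      show "Hb i \<in> ?hs" using i by (intro Hb_hs) auto
      show "\<forall>l\<in>{1..r}. ?lf l (\<lambda>a. (- A i i) * cm i a + (- ?lf i (cm i)) * cc i a) = ?lf l (Hb i)"
      proof
        fix l assume l: "l \<in> {1..r}"
        have "?lf l (Hb i) = alpha l i" using i by (intro lform_Hb) auto
        also have "\<dots> = of_int (N i l)" using alpha_N i l by blast
        finally have h: "?lf l (Hb i) = of_int (N i l)" .
        show "?lf l (\<lambda>a. (- A i i) * cm i a + (- ?lf i (cm i)) * cc i a) = ?lf l (Hb i)"
          unfolding lform_lin al_cm[OF i l] al_cm[OF i i] ccA[OF l] h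
          using num_XX[of A i N l, OF Aii[OF i] Ndiag] by (simp only: mult_minus_left add_uminus_conv_diff)
      qed
    qed
    also have "\<dots> = FH i" using i by (intro F_Hb) auto
    finally show "lbr (Xf i) (Yf i) = FH i" unfolding XY[OF i i] vw[OF i] amul_def by simp
  qed
  have P2: "\<forall>i\<in>{1..r}. \<forall>j\<in>{1..r}. i \<noteq> j \<longrightarrow> lbr (Xf i) (Yf j) = (\<lambda>x. 0)"
  proof (intro ballI impI)
    fix i j assume i: "i \<in> {1..r}" and j: "j \<in> {1..r}" and ij: "i \<noteq> j"
    have "F (\<lambda>a. (- A j i) * cm j a + (- ?lf i (cm j)) * cc i a) = F (\<lambda>a. 0)"
    proof (rule K5)
      show "(\<lambda>a. (- A j i) * cm j a + (- ?lf i (cm j)) * cc i a) \<in> ?hs"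
        by (intro hs_lin cm_hs cch j)
      show "(\<lambda>a. 0) \<in> ?hs" by (rule zero_hs)
      show "\<forall>l\<in>{1..r}. ?lf l (\<lambda>a. (- A j i) * cm j a + (- ?lf i (cm j)) * cc i a) = ?lf l (\<lambda>a. 0)"
      proof
        fix l assume l: "l \<in> {1..r}"
        show "?lf l (\<lambda>a. (- A j i) * cm j a + (- ?lf i (cm j)) * cc i a) = ?lf l (\<lambda>a. 0)"
          unfolding lform_lin al_cm[OF j l] al_cm[OF j i] ccA[OF l] lform_zero
          using num_XY[OF sol i j l ij Ndiag] by (simp only: mult_minus_left add_uminus_conv_diff)
      qed
    qed
    then show "lbr (Xf i) (Yf j) = (\<lambda>x. 0)" unfolding XY[OF i j] F_zerov amul_def by simp
  qed
  have P3: "\<forall>a\<in>{1..r+s}. \<forall>j\<in>{1..r}.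
            lbr (FH a) (Xf j) = (\<lambda>x. emb (alpha j a) * Xf j x) \<and>
            lbr (FH a) (Yf j) = (\<lambda>x. - (emb (alpha j a) * Yf j x))"
  proof (intro ballI conjI)
    fix a j assume a: "a \<in> {1..r+s}" and j: "j \<in> {1..r}"
    have FHa: "FH a = F (Hb a)" using a by (simp add: F_Hb)
    have lh: "?lf j (Hb a) = alpha j a" using a by (rule lform_Hb)
    show "lbr (FH a) (Xf j) = (\<lambda>x. emb (alpha j a) * Xf j x)"
      unfolding FHa XfF
      by (rule lbr_left) (auto simp: F_mult F_comm Fv[OF Hb_hs[OF a] j] lh)
    have "lbr (FH a) (Yf j) = (\<lambda>x. emb (- alpha j a) * Yf j x)"
      unfolding FHa YfF[OF j]
      by (rule lbr_left) (auto simp: F_mult F_comm Fw[OF Hb_hs[OF a] j] lh)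
    then show "lbr (FH a) (Yf j) = (\<lambda>x. - (emb (alpha j a) * Yf j x))" by (simp add: E)
  qed
  have P4: "\<forall>i\<in>{1..r}. \<forall>j\<in>{1..r}. i \<noteq> j \<longrightarrow>
            (lbr (Xf i) ^^ nat (1 - N i j)) (Xf j) = (\<lambda>x. 0) \<and>
            (lbr (Yf i) ^^ nat (1 - N i j)) (Yf j) = (\<lambda>x. 0)"
  proof (intro ballI impI conjI)
    fix i j assume i: "i \<in> {1..r}" and j: "j \<in> {1..r}" and ij: "i \<noteq> j"
    have ijr: "\<And>l. l \<in> {i,j} \<Longrightarrow> l \<in> {1..r}" using i j by auto
    note NS = num_serre[OF sol i j ij Nsym Ndiag]
    have EVv: "F d (v l) = emb (?lf l d) * v l" if "d \<in> ?hs" "l \<in> {i,j}" for d l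
      using Fv[OF that(1) ijr[OF that(2)]] .
    have EVw: "F d (w l) = emb (- ?lf l d) * w l" if "d \<in> ?hs" "l \<in> {i,j}" for d l
      using Fw[OF that(1) ijr[OF that(2)]] .
    have LINw: "- ?lf l (\<lambda>a. p * d a + q * d' a) = p * (- ?lf l d) + q * (- ?lf l d')" for l p q d d'
      unfolding lform_lin by (simp add: algebra_simps)
    have "(lbr (amul (v i) (F (cc i))) ^^ nat (1 - N i j)) (amul (v j) (F (cc j))) =
       amul (v i ^ nat (1 - N i j) * v j)
        (F (\<lambda>a. fst (PQ (?lf i (cc i)) (?lf i (cc j)) (?lf j (cc i)) (nat (1 - N i j))) * cc i a
              + snd (PQ (?lf i (cc i)) (?lf i (cc j)) (?lf j (cc i)) (nat (1 - N i j))) * cc j a))"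
      by (rule ad_iter[where S = ?hs, OF cch cch hs_lin EVv lform_lin])
    then show "(lbr (Xf i) ^^ nat (1 - N i j)) (Xf j) = (\<lambda>x. 0)"
      unfolding XfF ccA[OF i] ccA[OF j] NS(1) by (simp add: F_zerov amul_def)
    have "(lbr (amul (w i) (F (cm i))) ^^ nat (1 - N i j)) (amul (w j) (F (cm j))) =
       amul (w i ^ nat (1 - N i j) * w j)
        (F (\<lambda>a. fst (PQ (- ?lf i (cm i)) (- ?lf i (cm j)) (- ?lf j (cm i)) (nat (1 - N i j))) * cm i a
              + snd (PQ (- ?lf i (cm i)) (- ?lf i (cm j)) (- ?lf j (cm i)) (nat (1 - N i j))) * cm j a))"
      by (rule ad_iter[where S = ?hs and ev = "\<lambda>l d. - ?lf l d", OF cm_hs[OF i] cm_hs[OF j] hs_lin EVw LINw])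
    then show "(lbr (Yf i) ^^ nat (1 - N i j)) (Yf j) = (\<lambda>x. 0)"
      unfolding YfF[OF i] YfF[OF j] al_cm[OF i i] al_cm[OF j i] al_cm[OF i j] NS(2)
      by (simp add: F_zerov amul_def)
  qed
  show ?thesis
  proof (rule exI[of _ \<delta>], intro conjI)
    show "\<forall>j\<in>{1..r}. \<delta> j \<in> linmap emb (r+s) FH ` hspace (r+s) \<and>
        (\<forall>i\<in>{1..r}. induced_form emb (r+s) FH (alpha i) (\<delta> j) = A i j)"
      unfolding \<delta>_def using cch IF ccA by auto
    show "\<forall>\<delta>' :: nat \<Rightarrow> 'a \<Rightarrow> 'a.
        (\<forall>j\<in>{1..r}. \<delta>' j \<in> linmap emb (r+s) FH ` hspace (r+s) \<and>
          (\<forall>i\<in>{1..r}. induced_form emb (r+s) FH (alpha i) (\<delta>' j) = A i j))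
        \<longrightarrow> (\<forall>j\<in>{1..r}. \<delta>' j = \<delta> j)"
    proof (intro allI impI ballI)
      fix \<delta>' j
      assume H: "\<forall>j\<in>{1..r}. \<delta>' j \<in> linmap emb (r+s) FH ` hspace (r+s) \<and>
          (\<forall>i\<in>{1..r}. induced_form emb (r+s) FH (alpha i) (\<delta>' j) = A i j)"
        and j: "j \<in> {1..r}"
      obtain c' where c': "c' \<in> ?hs" "\<delta>' j = F c'" using H j by blast
      have "\<forall>l\<in>{1..r}. ?lf l c' = ?lf l (cc j)"
      proof
        fix l assume l: "l \<in> {1..r}"
        have "induced_form emb (r+s) FH (alpha l) (\<delta>' j) = A l j" using H j l by blast
        then have "?lf l c' = A l j" unfolding c'(2) IF[OF c'(1) l] .
        then show "?lf l c' = ?lf l (cc j)" using ccA[OF l] by simp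
      qed
      then have "F c' = F (cc j)" using K5 c'(1) cch by blast
      then show "\<delta>' j = \<delta> j" unfolding \<delta>_def c'(2) .
    qed
    show "let \<delta>m = (\<lambda>i x. emb (1 / A i i) * (- FH i x + emb (1 / A i i) * \<delta> i x));
          X = (\<lambda>i. amul (v i) (\<delta> i));
          Y = (\<lambda>i. amul (ainv (v i)) (\<delta>m i))
      in (\<forall>i\<in>{1..r}. lbr (X i) (Y i) = FH i) \<and>
         (\<forall>i\<in>{1..r}. \<forall>j\<in>{1..r}. i \<noteq> j \<longrightarrow> lbr (X i) (Y j) = (\<lambda>x. 0)) \<and>
         (\<forall>a\<in>{1..r+s}. \<forall>b\<in>{1..r+s}. lbr (FH a) (FH b) = (\<lambda>x. 0)) \<and>
         (\<forall>a\<in>{1..r+s}. \<forall>j\<in>{1..r}.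
            lbr (FH a) (X j) = (\<lambda>x. emb (alpha j a) * X j x) \<and>
            lbr (FH a) (Y j) = (\<lambda>x. - (emb (alpha j a) * Y j x))) \<and>
         (\<forall>i\<in>{1..r}. \<forall>j\<in>{1..r}. i \<noteq> j \<longrightarrow>
            (lbr (X i) ^^ nat (1 - N i j)) (X j) = (\<lambda>x. 0) \<and>
            (lbr (Y i) ^^ nat (1 - N i j)) (Y j) = (\<lambda>x. 0))"
      using P1 P2 F_hom P3 P4 unfolding Let_def Xf_def Yf_def by blast
  qed
qed

end
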